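(* Let $U\in\mathbb{R}^{n\times r}$, $H=U-U^\star P_U$, and suppose $\|H\|_F\le 0.07\,\underline c/\omega^3$. Under Assumptions (A1)–(A3) and $r=O(n^{1.25})$, for all sufficiently large $n$, with $T=U\circ U\circ U$, $$1.679\,\underline c^{\,4}\|H\|_F^2\le\|T-T^\star\|_F^2\le 10.336\,\omega^4\underline c^{\,4}\|H\|_F^2.$$
   Context: Notation. For $U=[u_1,\dots,u_r]\in\mathbb{R}^{n\times r}$, $U\circ U\circ U:=\sum_{j=1}^r u_j\otimes u_j\otimes u_j$, $(a\otimes b\otimes c)_{ijk}=a_ib_jc_k$; $\|\cdot\|_F$ is the Frobenius norm; for matrices $\|\cdot\|$ is the spectral norm. Setup. $T^\star=\sum_{p=1}^r c_p^\star\hat u_p\otimes\hat u_p\otimes\hat u_p$ with $c_p^\star>0$ and $\|\hat u_p\|_2=1$; $\hat U=[\hat u_1,\dots,\hat u_r]$; $U^\star=[(c_1^\star)^{1/3}\hat u_1,\dots,(c_r^\star)^{1/3}\hat u_r]$, so $T^\star=U^\star\circ U^\star\circ U^\star$. $\underline c=\min_p (c_p^\star)^{1/3}$, $\bar c=\max_p (c_p^\star)^{1/3}$, $\omega=\bar c/\underline c$. $P_U$ is an $r\times r$ permutation matrix minimizing $\|U-U^\star P\|_F$ over permutation matrices $P$. Assumptions. $\gamma$ denotes a quantity bounded by a polylogarithmic function of $n$, and $c_1>0$ an absolute constant. (A1) $\max_{i\ne j}|\langle\hat u_i,\hat u_j\rangle|\le\gamma/\sqrt n$. (A2) $\|\hat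 U\|\le 1+c_1\sqrt{r/n}$. (A3) $\|(\hat U^\top\hat U)\odot(\hat U^\top\hat U)-I_r\|\le\gamma\sqrt r/n$, $\odot$ the Hadamard product. Asymptotic convention: "for sufficiently large $n$" under hypotheses like $r=O(n^{a})$ refers to a family of instances indexed by $n$ and asserts the conclusion for all $n\ge n_0$, with $n_0$ depending only on the implicit constants. *)

theory Defs
  imports Complex_Main
begin

text \<open>Vectors in R^n are functions nat => real (entries at indices < n);
 n x r matrices are functions nat => nat => real (entries at i < n, j < r);
 order-3 tensors in R^{n x n x n} are functions nat => nat => nat => real.\<close>

definition sym_cp3 :: "nat \<Rightarrow> (nat \<Rightarrow> nat \<Rightarrow> real) \<Rightarrow> (nat \<Rightarrow> nat \<Rightarrow> nat \<Rightarrow> real)" where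
  "sym_cp3 r U = (\<lambda>i j k. \<Sum>p<r. U i p * U j p * U k p)"

definition tensor_frob :: "nat \<Rightarrow> (nat \<Rightarrow> nat \<Rightarrow> nat \<Rightarrow> real) \<Rightarrow> real" where
  "tensor_frob n T = sqrt (\<Sum>i<n. \<Sum>j<n. \<Sum>k<n. (T i j k)\<^sup>2)"

definition mat_frob :: "nat \<Rightarrow> nat \<Rightarrow> (nat \<Rightarrow> nat \<Rightarrow> real) \<Rightarrow> real" where
  "mat_frob m n A = sqrt (\<Sum>i<m. \<Sum>j<n. (A i j)\<^sup>2)"

definition vec_norm :: "nat \<Rightarrow> (nat \<Rightarrow> real) \<Rightarrow> real" where
  "vec_norm n x = sqrt (\<Sum>i<n. (x i)\<^sup>2)"

definition inner_n :: "nat \<Rightarrow> (nat \<Rightarrow> real) \<Rightarrow> (nat \<Rightarrow> real) \<Rightarrow> real" where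
  "inner_n n x y = (\<Sum>i<n. x i * y i)"

definition spec_norm :: "nat \<Rightarrow> nat \<Rightarrow> (nat \<Rightarrow> nat \<Rightarrow> real) \<Rightarrow> real" where
  "spec_norm m n A = Sup {vec_norm m (\<lambda>i. \<Sum>j<n. A i j * x j) | x. vec_norm n x \<le> 1}"

definition col :: "(nat \<Rightarrow> nat \<Rightarrow> real) \<Rightarrow> nat \<Rightarrow> (nat \<Rightarrow> real)" where
  "col A p = (\<lambda>i. A i p)"

end

theory Submission
  imports Defs "HOL-Analysis.L2_Norm" "HOL-Real_Asymp.Real_Asymp"
begin


definition rk3 :: "nat \<Rightarrow> (nat \<Rightarrow> nat \<Rightarrow> real) \<Rightarrow> (nat \<Rightarrow> nat \<Rightarrow> real) \<Rightarrow> (nat \<Rightarrow> nat \<Rightarrow> real) \<Rightarrow> (nat \<Rightarrow> nat \<Rightarrow> nat \<Rightarrow> real)" where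
  "rk3 r a b c = (\<lambda>i j l. \<Sum>p<r. a p i * b p j * c p l)"

definition ip :: "nat \<Rightarrow> (nat \<Rightarrow> real) \<Rightarrow> (nat \<Rightarrow> real) \<Rightarrow> real" where
  "ip n x y = (\<Sum>i<n. x i * y i)"

definition tip :: "nat \<Rightarrow> (nat \<Rightarrow> nat \<Rightarrow> nat \<Rightarrow> real) \<Rightarrow> (nat \<Rightarrow> nat \<Rightarrow> nat \<Rightarrow> real) \<Rightarrow> real" where
  "tip n X Y = (\<Sum>i<n. \<Sum>j<n. \<Sum>l<n. X i j l * Y i j l)"

lemma ip_commute: "ip n x y = ip n y x"
  unfolding ip_def by (simp add: mult.commute)

lemma swap3: "(\<Sum>x\<in>A. \<Sum>y\<in>B. \<Sum>z\<in>C. f x y z) = (\<Sum>y\<in>B. \<Sum>z\<in>C. \<Sum>x\<in>A. f x y z)"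
  by (rule trans[OF sum.swap], rule sum.cong[OF refl], rule sum.swap)

lemma prod3: "(\<Sum>i\<in>A. x i) * (\<Sum>j\<in>B. y j) * (\<Sum>l\<in>C. (z l::real)) = (\<Sum>i\<in>A. \<Sum>j\<in>B. \<Sum>l\<in>C. x i * y j * z l)"
  unfolding sum_distrib_right
  by (rule sum.cong[OF refl]) (simp add: sum_distrib_left sum_distrib_right mult.assoc sum.swap[of _ C])

lemma rk3_inner:
  "tip n (rk3 r a b c) (rk3 r d e f) =
   (\<Sum>p<r. \<Sum>q<r. ip n (a p) (d q) * ip n (b p) (e q) * ip n (c p) (f q))"
proof -
  have "tip n (rk3 r a b c) (rk3 r d e f) =
     (\<Sum>i<n. \<Sum>j<n. \<Sum>l<n. \<Sum>p<r. \<Sum>q<r. (a p i * d q i) * (b p j * e q j) * (c p l * f q l))"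
    unfolding tip_def rk3_def sum_product
    by (rule sum.cong[OF refl])+ (simp add: mult_ac)
  also have "\<dots> = (\<Sum>i<n. \<Sum>j<n. \<Sum>p<r. \<Sum>q<r. \<Sum>l<n. (a p i * d q i) * (b p j * e q j) * (c p l * f q l))"
    by (rule sum.cong[OF refl], rule sum.cong[OF refl], rule swap3)
  also have "\<dots> = (\<Sum>i<n. \<Sum>p<r. \<Sum>q<r. \<Sum>j<n. \<Sum>l<n. (a p i * d q i) * (b p j * e q j) * (c p l * f q l))"
    by (rule sum.cong[OF refl], rule swap3)
  also have "\<dots> = (\<Sum>p<r. \<Sum>q<r. \<Sum>i<n. \<Sum>j<n. \<Sum>l<n. (a p i * d q i) * (b p j * e q j) * (c p l * f q l))"
    by (rule swap3)
  also have "\<dots> = (\<Sum>p<r. \<Sum>q<r. ip n (a p) (d q) * ip n (b p) (e q) * ip n (c p) (f q))"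
    unfolding ip_def prod3 by simp
  finally show ?thesis .
qed

lemma tip_add_left: "tip n (\<lambda>i j l. X i j l + Y i j l) Z = tip n X Z + tip n Y Z"
  unfolding tip_def by (simp add: distrib_right sum.distrib)
lemma tip_add_right: "tip n Z (\<lambda>i j l. X i j l + Y i j l) = tip n Z X + tip n Z Y"
  unfolding tip_def by (simp add: distrib_left sum.distrib)
lemma tip_comm: "tip n X Y = tip n Y X"
  unfolding tip_def by (simp add: mult.commute)

lemma tensor_frob_tip: "tensor_frob n X = sqrt (tip n X X)"
  unfolding tensor_frob_def tip_def by (simp add: power2_eq_square)

lemma tensor_frob_L2: "tensor_frob n X = L2_set (\<lambda>(i,j,l). X i j l) ({..<n} \<times> {..<n} \<times> {..<n})"
  unfolding tensor_frob_def L2_set_def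
  by (simp add: sum.cartesian_product case_prod_beta)

lemma tensor_frob_triangle:
  "tensor_frob n (\<lambda>i j l. X i j l + Y i j l) \<le> tensor_frob n X + tensor_frob n Y"
proof -
  have "L2_set (\<lambda>(i,j,l). X i j l + Y i j l) ({..<n} \<times> {..<n} \<times> {..<n})
     = L2_set (\<lambda>x. (\<lambda>(i,j,l). X i j l) x + (\<lambda>(i,j,l). Y i j l) x) ({..<n} \<times> {..<n} \<times> {..<n})"
    by (rule L2_set_cong) auto
  also have "\<dots> \<le> L2_set (\<lambda>(i,j,l). X i j l) ({..<n} \<times> {..<n} \<times> {..<n}) + L2_set (\<lambda>(i,j,l). Y i j l) ({..<n} \<times> {..<n} \<times> {..<n})"
    by (rule L2_set_triangle_ineq)
  finally show ?thesis unfolding tensor_frob_L2 .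
qed




lemma vec_norm_L2: "vec_norm n x = L2_set x {..<n}"
  unfolding vec_norm_def L2_set_def by simp

lemma vec_norm_nonneg: "vec_norm n x \<ge> 0"
  unfolding vec_norm_def by (simp add: sum_nonneg)

lemma vec_norm_sq: "(vec_norm n x)\<^sup>2 = (\<Sum>i<n. (x i)\<^sup>2)"
  unfolding vec_norm_def by (simp add: sum_nonneg)

lemma ip_CS: "\<bar>ip n x y\<bar> \<le> vec_norm n x * vec_norm n y"
proof -
  have "\<bar>ip n x y\<bar> \<le> (\<Sum>i<n. \<bar>x i\<bar> * \<bar>y i\<bar>)"
    unfolding ip_def abs_mult[symmetric] by (rule sum_abs)
  also have "\<dots> \<le> vec_norm n x * vec_norm n y"
    unfolding vec_norm_L2 by (rule L2_set_mult_ineq)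
  finally show ?thesis .
qed

lemma vec_norm_scale: "vec_norm n (\<lambda>j. c * x j) = \<bar>c\<bar> * vec_norm n x"
proof -
  have "(\<Sum>j<n. (c * x j)\<^sup>2) = c\<^sup>2 * (\<Sum>j<n. (x j)\<^sup>2)"
    by (simp add: power_mult_distrib sum_distrib_left)
  thus ?thesis unfolding vec_norm_def by (simp add: real_sqrt_mult)
qed

lemma vec_norm_zero: assumes "vec_norm n x = 0" "j < n" shows "x j = 0"
proof -
  have "(\<Sum>i<n. (x i)\<^sup>2) = 0" using assms(1) unfolding vec_norm_def by (simp add: sum_nonneg)
  hence "\<forall>i\<in>{..<n}. (x i)\<^sup>2 = 0" by (subst (asm) sum_nonneg_eq_0_iff) auto
  thus ?thesis using assms(2) by simp
qed

lemma row_bound: "vec_norm m (\<lambda>i. \<Sum>j<n. A i j * x j) \<le> sqrt (\<Sum>i<m. \<Sum>j<n. (A i j)\<^sup>2) * vec_norm n x"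
proof -
  have "\<And>i. (\<Sum>j<n. A i j * x j)\<^sup>2 \<le> (\<Sum>j<n. (A i j)\<^sup>2) * (vec_norm n x)\<^sup>2"
  proof -
    fix i
    have "\<bar>\<Sum>j<n. A i j * x j\<bar> \<le> vec_norm n (A i) * vec_norm n x"
      using ip_CS[of n "A i" x] unfolding ip_def .
    hence "(\<Sum>j<n. A i j * x j)\<^sup>2 \<le> (vec_norm n (A i) * vec_norm n x)\<^sup>2"
      by (metis abs_ge_zero power2_abs power_mono)
    thus "(\<Sum>j<n. A i j * x j)\<^sup>2 \<le> (\<Sum>j<n. (A i j)\<^sup>2) * (vec_norm n x)\<^sup>2"
      by (simp add: power_mult_distrib vec_norm_sq)
  qed
  hence "(\<Sum>i<m. (\<Sum>j<n. A i j * x j)\<^sup>2) \<le> (\<Sum>i<m. \<Sum>j<n. (A i j)\<^sup>2) * (vec_norm n x)\<^sup>2"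
    by (simp add: sum_distrib_right sum_mono)
  hence "sqrt (\<Sum>i<m. (\<Sum>j<n. A i j * x j)\<^sup>2) \<le> sqrt ((\<Sum>i<m. \<Sum>j<n. (A i j)\<^sup>2) * (vec_norm n x)\<^sup>2)"
    using real_sqrt_le_mono by blast
  thus ?thesis unfolding vec_norm_def[of m]
    by (simp add: real_sqrt_mult abs_of_nonneg[OF vec_norm_nonneg])
qed

lemma spec_bound:
  "vec_norm m (\<lambda>i. \<Sum>j<n. A i j * x j) \<le> spec_norm m n A * vec_norm n x"
proof -
  define F where "F = sqrt (\<Sum>i<m. \<Sum>j<n. (A i j)\<^sup>2)"
  define S where "S = {vec_norm m (\<lambda>i. \<Sum>j<n. A i j * x j) | x. vec_norm n x \<le> 1}"
  have F0: "F \<ge> 0" unfolding F_def by (simp add: sum_nonneg)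
  have bdd: "bdd_above S"
  proof (rule bdd_aboveI)
    fix s assume "s \<in> S"
    then obtain z where z: "s = vec_norm m (\<lambda>i. \<Sum>j<n. A i j * z j)" "vec_norm n z \<le> 1"
      unfolding S_def by blast
    have "s \<le> F * vec_norm n z" using z(1) row_bound unfolding F_def by simp
    also have "\<dots> \<le> F" using z(2) F0 by (simp add: mult_left_le)
    finally show "s \<le> F" .
  qed
  show ?thesis
  proof (cases "vec_norm n x = 0")
    case True
    hence "\<And>j. j < n \<Longrightarrow> x j = 0" using vec_norm_zero by blast
    hence "(\<lambda>i. \<Sum>j<n. A i j * x j) = (\<lambda>i. 0)" by simp
    thus ?thesis using True by (simp add: vec_norm_def)
  next
    case False
    define t where "t = vec_norm n x"
    have t0: "t > 0" using False vec_norm_nonneg unfolding t_def by (metis less_eq_real_def)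
    define y where "y = (\<lambda>j. (1/t) * x j)"
    have ny: "vec_norm n y = 1" unfolding y_def vec_norm_scale using t0 by (simp add: t_def)
    have "vec_norm m (\<lambda>i. \<Sum>j<n. A i j * y j) \<in> S" unfolding S_def using ny by auto
    hence le: "vec_norm m (\<lambda>i. \<Sum>j<n. A i j * y j) \<le> spec_norm m n A"
      unfolding spec_norm_def S_def[symmetric] using bdd by (rule cSup_upper)
    have "(\<lambda>i. \<Sum>j<n. A i j * x j) = (\<lambda>i. t * (\<Sum>j<n. A i j * y j))"
      unfolding y_def using t0 by (simp add: sum_distrib_left)
    hence "vec_norm m (\<lambda>i. \<Sum>j<n. A i j * x j) = t * vec_norm m (\<lambda>i. \<Sum>j<n. A i j * y j)"
      using t0 by (simp add: vec_norm_scale)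
    also have "\<dots> \<le> t * spec_norm m n A" using le t0 by simp
    finally show ?thesis by (simp add: t_def mult.commute)
  qed
qed




lemma quad_bound:
  assumes "spec_norm r r E \<le> \<epsilon>"
  shows "\<bar>\<Sum>p<r. \<Sum>q<r. x p * E p q * x q\<bar> \<le> \<epsilon> * (\<Sum>p<r. (x p)\<^sup>2)"
proof -
  have eq: "(\<Sum>p<r. \<Sum>q<r. x p * E p q * x q) = ip r x (\<lambda>p. \<Sum>q<r. E p q * x q)"
    unfolding ip_def by (simp add: sum_distrib_left mult.assoc)
  have "\<bar>ip r x (\<lambda>p. \<Sum>q<r. E p q * x q)\<bar> \<le> vec_norm r x * vec_norm r (\<lambda>p. \<Sum>q<r. E p q * x q)"
    by (rule ip_CS)
  also have "\<dots> \<le> vec_norm r x * (spec_norm r r E * vec_norm r x)"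
    by (rule mult_left_mono[OF spec_bound vec_norm_nonneg])
  also have "\<dots> \<le> vec_norm r x * (\<epsilon> * vec_norm r x)"
    by (intro mult_left_mono mult_right_mono assms vec_norm_nonneg)
  also have "\<dots> = \<epsilon> * (\<Sum>p<r. (x p)\<^sup>2)"
    using vec_norm_sq[of r x] by (simp add: power2_eq_square mult_ac)
  finally show ?thesis using eq by simp
qed

lemma transpose_bound:
  assumes "spec_norm n r M \<le> \<beta>"
  shows "(\<Sum>q<r. (\<Sum>i<n. h i * M i q)\<^sup>2) \<le> \<beta>\<^sup>2 * (vec_norm n h)\<^sup>2"
proof -
  define t where "t = (\<lambda>q. \<Sum>i<n. h i * M i q)"
  have "(\<Sum>q<r. (t q)\<^sup>2) = (\<Sum>q<r. \<Sum>i<n. h i * M i q * t q)"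
    unfolding t_def by (simp add: power2_eq_square sum_distrib_right)
  also have "\<dots> = (\<Sum>i<n. \<Sum>q<r. h i * M i q * t q)" by (rule sum.swap)
  also have "\<dots> = ip n h (\<lambda>i. \<Sum>q<r. M i q * t q)"
    unfolding ip_def by (simp add: sum_distrib_left mult.assoc)
  finally have eq: "(vec_norm r t)\<^sup>2 = ip n h (\<lambda>i. \<Sum>q<r. M i q * t q)" by (simp add: vec_norm_sq)
  have "ip n h (\<lambda>i. \<Sum>q<r. M i q * t q) \<le> vec_norm n h * vec_norm n (\<lambda>i. \<Sum>q<r. M i q * t q)"
    using ip_CS abs_le_D1 by blast
  also have "\<dots> \<le> vec_norm n h * (spec_norm n r M * vec_norm r t)"
    by (rule mult_left_mono[OF spec_bound vec_norm_nonneg])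
  finally have le: "(vec_norm r t)\<^sup>2 \<le> vec_norm n h * (spec_norm n r M * vec_norm r t)" using eq by simp
  have "(vec_norm r t)\<^sup>2 \<le> (\<beta> * vec_norm n h)\<^sup>2"
  proof (cases "vec_norm r t = 0")
    case True thus ?thesis by simp
  next
    case False
    hence tp: "vec_norm r t > 0" using vec_norm_nonneg by (metis less_eq_real_def)
    have "vec_norm r t * vec_norm r t \<le> (spec_norm n r M * vec_norm n h) * vec_norm r t"
      using le by (simp add: power2_eq_square mult_ac)
    hence "vec_norm r t \<le> spec_norm n r M * vec_norm n h" using tp by simp
    also have "\<dots> \<le> \<beta> * vec_norm n h" by (intro mult_right_mono assms vec_norm_nonneg)
    finally have "vec_norm r t \<le> \<beta> * vec_norm n h" .
    thus ?thesis using vec_norm_nonneg[of r t] by (metis power_mono)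
  qed
  thus ?thesis by (simp add: vec_norm_sq t_def power_mult_distrib)
qed




lemma amgm_lower:
  fixes X Z G g :: real
  assumes "\<bar>G\<bar> \<le> g"
  shows "X * Z * G \<ge> - (g / 2) * (X\<^sup>2 + Z\<^sup>2)"
proof -
  have g0: "g \<ge> 0" using assms by linarith
  have "\<bar>X * Z * G\<bar> \<le> \<bar>X\<bar> * \<bar>Z\<bar> * g"
    by (simp add: abs_mult assms mult_left_mono)
  also have "\<dots> \<le> (X\<^sup>2 + Z\<^sup>2) / 2 * g"
  proof (rule mult_right_mono[OF _ g0])
    have "0 \<le> (\<bar>X\<bar> - \<bar>Z\<bar>)\<^sup>2" by simp
    thus "\<bar>X\<bar> * \<bar>Z\<bar> \<le> (X\<^sup>2 + Z\<^sup>2) / 2" by (simp add: power2_eq_square algebra_simps)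
  qed
  finally show ?thesis by (simp add: abs_le_iff mult_ac)
qed

locale core =
  fixes n r :: nat and uh :: "nat \<Rightarrow> nat \<Rightarrow> real" and c :: "nat \<Rightarrow> real"
    and h :: "nat \<Rightarrow> nat \<Rightarrow> real" and clow chigh g \<beta> \<epsilon> :: real
  assumes c_lo: "\<And>p. p < r \<Longrightarrow> clow \<le> c p"
    and c_hi: "\<And>p. p < r \<Longrightarrow> c p \<le> chigh"
    and clow_pos: "0 < clow"
    and unit: "\<And>p. p < r \<Longrightarrow> (\<Sum>i<n. (uh i p)\<^sup>2) = 1"
    and offd: "\<And>p q. p < r \<Longrightarrow> q < r \<Longrightarrow> p \<noteq> q \<Longrightarrow> \<bar>\<Sum>i<n. uh i p * uh i q\<bar> \<le> g"
    and g_nonneg: "0 \<le> g"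
    and specU: "spec_norm n r uh \<le> \<beta>"
    and specE: "spec_norm r r (\<lambda>p q. (\<Sum>i<n. uh i p * uh i q) * (\<Sum>i<n. uh i p * uh i q)
                   - (if p = q then 1 else 0)) \<le> \<epsilon>"
begin

definition G where "G p q = (\<Sum>i<n. uh i p * uh i q)"
definition v where "v p i = c p * uh i p"
definition a where "a p = vec_norm n (h p)"
definition S where "S = (\<Sum>p<r. (a p)\<^sup>2)"
definition Y where "Y = (\<Sum>p<r. (c p)^4 * (a p)\<^sup>2)"
definition S1 where "S1 = (\<Sum>p<r. \<Sum>q<r. ip n (h p) (h q) * ip n (v p) (v q) * ip n (v p) (v q))"
definition S2 where "S2 = (\<Sum>p<r. \<Sum>q<r. ip n (h p) (v q) * ip n (v p) (h q) * ip n (v p) (v q))"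

lemma c_pos: "p < r \<Longrightarrow> c p > 0" using c_lo clow_pos by force

lemma G_diag: "p < r \<Longrightarrow> G p p = 1" unfolding G_def using unit by (simp add: power2_eq_square)

lemma G_abs: assumes "p < r" "q < r" shows "\<bar>G p q\<bar> \<le> 1"
proof -
  have "\<bar>G p q\<bar> \<le> vec_norm n (\<lambda>i. uh i p) * vec_norm n (\<lambda>i. uh i q)"
    using ip_CS[of n "\<lambda>i. uh i p" "\<lambda>i. uh i q"] unfolding G_def ip_def .
  thus ?thesis using unit assms unfolding vec_norm_def by simp
qed

lemma ip_vv: "ip n (v p) (v q) = c p * c q * G p q"
  unfolding ip_def v_def G_def by (simp add: sum_distrib_left mult_ac)

lemma ip_vv_abs: assumes "p < r" "q < r" shows "\<bar>ip n (v p) (v q)\<bar> \<le> chigh\<^sup>2"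
proof -
  have "\<bar>ip n (v p) (v q)\<bar> = c p * c q * \<bar>G p q\<bar>"
    unfolding ip_vv using c_pos[OF assms(1)] c_pos[OF assms(2)] by (simp add: abs_mult)
  also have "\<dots> \<le> chigh * chigh * 1"
    using c_pos c_hi G_abs assms
    by (intro mult_mono) (auto intro: mult_nonneg_nonneg less_imp_le order.trans[OF less_imp_le[OF c_pos]])
  finally show ?thesis by (simp add: power2_eq_square)
qed

lemma a_nonneg: "a p \<ge> 0" unfolding a_def by (rule vec_norm_nonneg)
lemma a_sq: "(a p)\<^sup>2 = (\<Sum>i<n. (h p i)\<^sup>2)" unfolding a_def by (rule vec_norm_sq)
lemma S_nonneg: "S \<ge> 0" unfolding S_def by (simp add: sum_nonneg)

lemma Y_bounds: "clow^4 * S \<le> Y" "Y \<le> chigh^4 * S"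
proof -
  have "\<And>p. p < r \<Longrightarrow> clow^4 * (a p)\<^sup>2 \<le> (c p)^4 * (a p)\<^sup>2"
    using c_lo clow_pos by (intro mult_right_mono power_mono) auto
  thus "clow^4 * S \<le> Y" unfolding S_def Y_def sum_distrib_left by (intro sum_mono) auto
  have "\<And>p. p < r \<Longrightarrow> (c p)^4 * (a p)\<^sup>2 \<le> chigh^4 * (a p)\<^sup>2"
    using c_hi c_pos by (intro mult_right_mono power_mono) (auto intro: less_imp_le)
  thus "Y \<le> chigh^4 * S" unfolding S_def Y_def sum_distrib_left by (intro sum_mono) auto
qed

end



context core begin

definition E where "E p q = G p q * G p q - (if p = q then 1 else 0)"
definition x where "x i p = (c p)\<^sup>2 * h p i"

lemma specE': "spec_norm r r E \<le> \<epsilon>"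
  using specE unfolding E_def G_def .

lemma Y_x: "Y = (\<Sum>i<n. \<Sum>p<r. (x i p)\<^sup>2)"
proof -
  have "Y = (\<Sum>p<r. \<Sum>i<n. (x i p)\<^sup>2)"
    unfolding Y_def a_sq x_def sum_distrib_left
    by (intro sum.cong refl) (simp add: power2_eq_square power4_eq_xxxx mult_ac)
  also have "\<dots> = (\<Sum>i<n. \<Sum>p<r. (x i p)\<^sup>2)" by (rule sum.swap)
  finally show ?thesis .
qed

lemma quad_split:
  "(\<Sum>p<r. \<Sum>q<r. y p * (G p q * G p q) * y q) = (\<Sum>p<r. \<Sum>q<r. y p * E p q * y q) + (\<Sum>p<r. (y p)\<^sup>2)"
proof -
  have "(\<Sum>p<r. \<Sum>q<r. y p * (G p q * G p q) * y q)
      = (\<Sum>p<r. \<Sum>q<r. y p * E p q * y q + (if q = p then y p * y p else 0))"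
    unfolding E_def by (intro sum.cong refl) (auto simp: algebra_simps)
  also have "\<dots> = (\<Sum>p<r. \<Sum>q<r. y p * E p q * y q) + (\<Sum>p<r. (y p)\<^sup>2)"
    by (simp add: sum.distrib power2_eq_square)
  finally show ?thesis .
qed

lemma S1_eq: "S1 = (\<Sum>i<n. \<Sum>p<r. \<Sum>q<r. x i p * E p q * x i q) + Y"
proof -
  have "S1 = (\<Sum>p<r. \<Sum>q<r. \<Sum>i<n. x i p * (G p q * G p q) * x i q)"
    unfolding S1_def ip_vv unfolding ip_def x_def sum_distrib_right
    by (intro sum.cong refl) (simp add: power2_eq_square mult_ac)
  also have "\<dots> = (\<Sum>i<n. \<Sum>p<r. \<Sum>q<r. x i p * (G p q * G p q) * x i q)"
    by (rule swap3[symmetric])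
  also have "\<dots> = (\<Sum>i<n. (\<Sum>p<r. \<Sum>q<r. x i p * E p q * x i q) + (\<Sum>p<r. (x i p)\<^sup>2))"
    by (rule sum.cong[OF refl], rule quad_split)
  also have "\<dots> = (\<Sum>i<n. \<Sum>p<r. \<Sum>q<r. x i p * E p q * x i q) + Y"
    by (simp add: sum.distrib Y_x)
  finally show ?thesis .
qed

lemma S1_bounds: "(1 - \<epsilon>) * Y \<le> S1" "S1 \<le> (1 + \<epsilon>) * Y"
proof -
  have "\<bar>\<Sum>i<n. \<Sum>p<r. \<Sum>q<r. x i p * E p q * x i q\<bar> \<le> (\<Sum>i<n. \<bar>\<Sum>p<r. \<Sum>q<r. x i p * E p q * x i q\<bar>)"
    by (rule sum_abs)
  also have "\<dots> \<le> (\<Sum>i<n. \<epsilon> * (\<Sum>p<r. (x i p)\<^sup>2))"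
    by (intro sum_mono quad_bound specE')
  also have "\<dots> = \<epsilon> * Y" by (simp add: Y_x sum_distrib_left)
  finally have "\<bar>S1 - Y\<bar> \<le> \<epsilon> * Y" using S1_eq by simp
  thus "(1 - \<epsilon>) * Y \<le> S1" "S1 \<le> (1 + \<epsilon>) * Y" by (auto simp: algebra_simps abs_le_iff)
qed

end



context core begin

definition B where "B p q = (\<Sum>i<n. h p i * uh i q)"

lemma S2_term: "ip n (h p) (v q) * ip n (v p) (h q) * ip n (v p) (v q)
   = ((c p)\<^sup>2 * B p q) * ((c q)\<^sup>2 * B q p) * G p q"
proof -
  have "ip n (h p) (v q) = c q * B p q" unfolding ip_def v_def B_def by (simp add: sum_distrib_left mult_ac)
  moreover have "ip n (v p) (h q) = c p * B q p" unfolding ip_def v_def B_def by (simp add: sum_distrib_left mult_ac)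
  ultimately show ?thesis unfolding ip_vv by (simp add: power2_eq_square mult_ac)
qed

lemma S2_term_lower:
  assumes "p < r" "q < r"
  shows "ip n (h p) (v q) * ip n (v p) (h q) * ip n (v p) (v q)
     \<ge> - (g / 2) * (((c p)\<^sup>2 * B p q)\<^sup>2 + ((c q)\<^sup>2 * B q p)\<^sup>2)"
proof (cases "p = q")
  case True
  have "- (g / 2) * (((c p)\<^sup>2 * B p q)\<^sup>2 + ((c q)\<^sup>2 * B q p)\<^sup>2) \<le> 0"
    using g_nonneg by (simp add: mult_nonneg_nonneg)
  also have "0 \<le> ((c p)\<^sup>2 * B p q) * ((c q)\<^sup>2 * B q p) * G p q"
    using True G_diag[OF assms(1)] by simp
  finally show ?thesis unfolding S2_term .
next
  case False
  show ?thesis unfolding S2_term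
    by (rule amgm_lower) (use offd[OF assms False] in \<open>simp add: G_def\<close>)
qed

lemma B_bound: "p < r \<Longrightarrow> (\<Sum>q<r. (B p q)\<^sup>2) \<le> \<beta>\<^sup>2 * (a p)\<^sup>2"
  unfolding B_def a_def using transpose_bound[OF specU, of "h p"] by simp

lemma S2_lower: "S2 \<ge> - (g * \<beta>\<^sup>2 * Y)"
proof -
  have sumX: "(\<Sum>p<r. \<Sum>q<r. ((c p)\<^sup>2 * B p q)\<^sup>2) \<le> \<beta>\<^sup>2 * Y"
  proof -
    have "(\<Sum>p<r. \<Sum>q<r. ((c p)\<^sup>2 * B p q)\<^sup>2) = (\<Sum>p<r. (c p)^4 * (\<Sum>q<r. (B p q)\<^sup>2))"
      by (simp add: sum_distrib_left power_mult_distrib flip: power_mult)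
    also have "\<dots> \<le> (\<Sum>p<r. (c p)^4 * (\<beta>\<^sup>2 * (a p)\<^sup>2))"
      by (intro sum_mono mult_left_mono B_bound) auto
    also have "\<dots> = \<beta>\<^sup>2 * Y" unfolding Y_def by (simp add: sum_distrib_left mult_ac)
    finally show ?thesis .
  qed
  have sumZ: "(\<Sum>p<r. \<Sum>q<r. ((c q)\<^sup>2 * B q p)\<^sup>2) = (\<Sum>p<r. \<Sum>q<r. ((c p)\<^sup>2 * B p q)\<^sup>2)"
    by (rule sum.swap)
  have "S2 \<ge> (\<Sum>p<r. \<Sum>q<r. - (g / 2) * (((c p)\<^sup>2 * B p q)\<^sup>2 + ((c q)\<^sup>2 * B q p)\<^sup>2))"
    unfolding S2_def by (intro sum_mono S2_term_lower) auto
  moreover have "(\<Sum>p<r. \<Sum>q<r. - (g / 2) * (((c p)\<^sup>2 * B p q)\<^sup>2 + ((c q)\<^sup>2 * B q p)\<^sup>2))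
      = - g * (\<Sum>p<r. \<Sum>q<r. ((c p)\<^sup>2 * B p q)\<^sup>2)"
  proof -
    have "(\<Sum>p<r. \<Sum>q<r. - (g / 2) * (((c p)\<^sup>2 * B p q)\<^sup>2 + ((c q)\<^sup>2 * B q p)\<^sup>2))
       = - (g / 2) * (\<Sum>p<r. \<Sum>q<r. (((c p)\<^sup>2 * B p q)\<^sup>2 + ((c q)\<^sup>2 * B q p)\<^sup>2))"
      by (simp only: sum_distrib_left)
    also have "(\<Sum>p<r. \<Sum>q<r. (((c p)\<^sup>2 * B p q)\<^sup>2 + ((c q)\<^sup>2 * B q p)\<^sup>2))
       = (\<Sum>p<r. \<Sum>q<r. ((c p)\<^sup>2 * B p q)\<^sup>2) + (\<Sum>p<r. \<Sum>q<r. ((c q)\<^sup>2 * B q p)\<^sup>2)"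
      by (simp only: sum.distrib)
    finally show ?thesis using sumZ by simp
  qed
  moreover have "- g * (\<Sum>p<r. \<Sum>q<r. ((c p)\<^sup>2 * B p q)\<^sup>2) \<ge> - (g * \<beta>\<^sup>2 * Y)"
    using sumX g_nonneg by (simp add: mult_left_mono mult.assoc)
  ultimately show ?thesis by linarith
qed

lemma ip_hh_abs: "\<bar>ip n (h p) (h q)\<bar> \<le> a p * a q"
  unfolding a_def by (rule ip_CS)

lemma a_le: "p < r \<Longrightarrow> a p \<le> sqrt S"
proof -
  assume "p < r"
  hence "(a p)\<^sup>2 \<le> S" unfolding S_def
    by (intro member_le_sum) auto
  thus ?thesis using a_nonneg by (simp add: real_le_rsqrt)
qed

lemma NQ_bound: "(\<Sum>p<r. \<Sum>q<r. ip n (h p) (h q) * ip n (h p) (h q) * ip n (v p) (v q)) \<le> chigh\<^sup>2 * S\<^sup>2"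
proof -
  have "(\<Sum>p<r. \<Sum>q<r. ip n (h p) (h q) * ip n (h p) (h q) * ip n (v p) (v q))
      \<le> (\<Sum>p<r. \<Sum>q<r. ((a p)\<^sup>2 * (a q)\<^sup>2) * chigh\<^sup>2)"
  proof (intro sum_mono)
    fix p q assume pq: "p \<in> {..<r}" "q \<in> {..<r}"
    have "ip n (h p) (h q) * ip n (h p) (h q) * ip n (v p) (v q) \<le> \<bar>ip n (h p) (h q) * ip n (h p) (h q)\<bar> * \<bar>ip n (v p) (v q)\<bar>"
      by (metis abs_ge_self abs_mult)
    also have "\<dots> \<le> ((a p)\<^sup>2 * (a q)\<^sup>2) * chigh\<^sup>2"
    proof (rule mult_mono)
      have "\<bar>ip n (h p) (h q)\<bar> * \<bar>ip n (h p) (h q)\<bar> \<le> (a p * a q) * (a p * a q)"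
        using ip_hh_abs a_nonneg by (intro mult_mono) (auto intro: mult_nonneg_nonneg)
      thus "\<bar>ip n (h p) (h q) * ip n (h p) (h q)\<bar> \<le> (a p)\<^sup>2 * (a q)\<^sup>2"
        by (simp add: abs_mult power2_eq_square mult_ac)
      show "\<bar>ip n (v p) (v q)\<bar> \<le> chigh\<^sup>2" using ip_vv_abs pq by auto
    qed (auto)
    finally show "ip n (h p) (h q) * ip n (h p) (h q) * ip n (v p) (v q) \<le> ((a p)\<^sup>2 * (a q)\<^sup>2) * chigh\<^sup>2" .
  qed
  also have "\<dots> = chigh\<^sup>2 * S\<^sup>2"
    unfolding S_def power2_eq_square[of "sum _ _"] sum_product
    by (simp add: sum_distrib_left sum_distrib_right mult_ac)
  finally show ?thesis .
qed

lemma NC_bound: "(\<Sum>p<r. \<Sum>q<r. ip n (h p) (h q) * ip n (h p) (h q) * ip n (h p) (h q)) \<le> S ^ 3"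
proof -
  have "(\<Sum>p<r. \<Sum>q<r. ip n (h p) (h q) * ip n (h p) (h q) * ip n (h p) (h q))
      \<le> (\<Sum>p<r. \<Sum>q<r. (a p)^3 * (a q)^3)"
  proof (intro sum_mono)
    fix p q
    have "ip n (h p) (h q) * ip n (h p) (h q) * ip n (h p) (h q) \<le> \<bar>ip n (h p) (h q) * ip n (h p) (h q) * ip n (h p) (h q)\<bar>"
      by (rule abs_ge_self)
    also have "\<dots> = \<bar>ip n (h p) (h q)\<bar> ^ 3" by (simp add: abs_mult power3_eq_cube)
    also have "\<dots> \<le> (a p * a q) ^ 3" by (intro power_mono ip_hh_abs) auto
    finally show "ip n (h p) (h q) * ip n (h p) (h q) * ip n (h p) (h q) \<le> (a p)^3 * (a q)^3"
      by (simp add: power_mult_distrib)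
  qed
  also have "\<dots> = (\<Sum>p<r. (a p)^3)\<^sup>2"
    unfolding power2_eq_square sum_product by (simp add: sum_distrib_left)
  also have "\<dots> \<le> (sqrt S * S)\<^sup>2"
  proof (rule power_mono)
    have "(\<Sum>p<r. (a p)^3) \<le> (\<Sum>p<r. sqrt S * (a p)\<^sup>2)"
    proof (intro sum_mono)
      fix p assume "p \<in> {..<r}"
      hence "a p \<le> sqrt S" using a_le by auto
      hence "a p * (a p * a p) \<le> sqrt S * (a p * a p)" using a_nonneg[of p] by (intro mult_right_mono) auto
      thus "(a p)^3 \<le> sqrt S * (a p)\<^sup>2" by (simp add: power3_eq_cube power2_eq_square mult_ac)
    qed
    thus "(\<Sum>p<r. (a p)^3) \<le> sqrt S * S" by (simp add: S_def sum_distrib_left)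
    show "0 \<le> (\<Sum>p<r. (a p)^3)" using a_nonneg by (simp add: sum_nonneg)
  qed
  also have "\<dots> = S ^ 3" using S_nonneg by (simp add: power_mult_distrib power3_eq_cube power2_eq_square)
  finally show ?thesis .
qed

end



lemma tensor_frob_nonneg: "tensor_frob n X \<ge> 0"
  unfolding tensor_frob_def by (simp add: sum_nonneg)

lemma tensor_frob_neg: "tensor_frob n (\<lambda>i j l. - X i j l) = tensor_frob n X"
  unfolding tensor_frob_def by simp

lemma tensor_frob_triangle3:
  "tensor_frob n (\<lambda>i j l. X i j l + Y i j l + Z i j l) \<le> tensor_frob n X + tensor_frob n Y + tensor_frob n Z"
  using tensor_frob_triangle[of n "\<lambda>i j l. X i j l + Y i j l" Z] tensor_frob_triangle[of n X Y] by simp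

context core begin

definition D where "D = (\<lambda>i j l. (\<Sum>p<r. (h p i + v p i) * (h p j + v p j) * (h p l + v p l))
                              - (\<Sum>p<r. v p i * v p j * v p l))"
definition L where "L = (\<lambda>i j l. rk3 r h v v i j l + rk3 r v h v i j l + rk3 r v v h i j l)"
definition Q where "Q = (\<lambda>i j l. rk3 r h h v i j l + rk3 r h v h i j l + rk3 r v h h i j l)"
definition C where "C = rk3 r h h h"
definition NQs where "NQs = (\<Sum>p<r. \<Sum>q<r. ip n (h p) (h q) * ip n (h p) (h q) * ip n (v p) (v q))"
definition NCs where "NCs = (\<Sum>p<r. \<Sum>q<r. ip n (h p) (h q) * ip n (h p) (h q) * ip n (h p) (h q))"

lemma D_split: "D = (\<lambda>i j l. L i j l + Q i j l + C i j l)"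
  unfolding D_def L_def Q_def C_def rk3_def
  by (intro ext) (simp add: sum_subtractf[symmetric] sum.distrib[symmetric] algebra_simps)

lemma tipL: "tip n L L = 3 * S1 + 6 * S2"
  unfolding L_def by (simp add: tip_add_left tip_add_right rk3_inner S1_def S2_def mult_ac)

lemma NL_upper: "tensor_frob n L \<le> 3 * sqrt S1"
proof -
  have "tensor_frob n L \<le> tensor_frob n (rk3 r h v v) + tensor_frob n (rk3 r v h v) + tensor_frob n (rk3 r v v h)"
    unfolding L_def by (rule tensor_frob_triangle3)
  also have "\<dots> = 3 * sqrt S1"
    by (simp add: tensor_frob_tip rk3_inner S1_def mult_ac)
  finally show ?thesis .
qed

lemma NQ_upper: "tensor_frob n Q \<le> 3 * sqrt NQs"
proof -
  have "tensor_frob n Q \<le> tensor_frob n (rk3 r h h v) + tensor_frob n (rk3 r h v h) + tensor_frob n (rk3 r v h h)"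
    unfolding Q_def by (rule tensor_frob_triangle3)
  also have "\<dots> = 3 * sqrt NQs"
    by (simp add: tensor_frob_tip rk3_inner NQs_def mult_ac)
  finally show ?thesis .
qed

lemma NC_eq: "tensor_frob n C = sqrt NCs"
  unfolding C_def NCs_def by (simp add: tensor_frob_tip rk3_inner)

lemma ND_upper: "tensor_frob n D \<le> tensor_frob n L + tensor_frob n Q + tensor_frob n C"
  unfolding D_split by (rule tensor_frob_triangle3)

lemma ND_lower: "tensor_frob n L - tensor_frob n Q - tensor_frob n C \<le> tensor_frob n D"
proof -
  have "L = (\<lambda>i j l. D i j l + (- Q i j l) + (- C i j l))" unfolding D_split by auto
  hence "tensor_frob n L \<le> tensor_frob n D + tensor_frob n (\<lambda>i j l. - Q i j l) + tensor_frob n (\<lambda>i j l. - C i j l)"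
    using tensor_frob_triangle3[of n D "\<lambda>i j l. - Q i j l" "\<lambda>i j l. - C i j l"] by simp
  thus ?thesis by (simp add: tensor_frob_neg)
qed

end



context core begin

lemma Y_nonneg: "Y \<ge> 0" unfolding Y_def by (simp add: sum_nonneg)

lemma core_main:
  assumes e0: "0 \<le> \<epsilon>" and e1: "\<epsilon> \<le> 1/100000" and gb: "g * \<beta>\<^sup>2 \<le> 1/10"
    and cc: "clow \<le> chigh" and small: "sqrt S \<le> 7/100 * clow^4 / chigh^3"
  shows "1.679 * clow^4 * S \<le> (tensor_frob n D)\<^sup>2"
    and "(tensor_frob n D)\<^sup>2 \<le> 10.336 * chigh^4 * S"
proof -
  have S0: "0 \<le> S" unfolding S_def by (simp add: sum_nonneg)
  define t where "t = sqrt S"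
  have t0: "t \<ge> 0" unfolding t_def using S0 by simp
  have St: "S = t\<^sup>2" unfolding t_def using S0 by simp
  have ch0: "chigh > 0" using cc clow_pos by linarith
  have k1: "t \<le> 7/100 * clow"
  proof -
    have "clow^3 \<le> chigh^3" using cc clow_pos by (intro power_mono) auto
    hence "clow * clow^3 \<le> clow * chigh^3" using clow_pos by (intro mult_left_mono) auto
    moreover have "clow^4 = clow * clow^3" by (simp add: power4_eq_xxxx power3_eq_cube mult_ac)
    ultimately have "clow^4 \<le> clow * chigh^3" by simp
    hence "clow^4 / chigh^3 \<le> clow" using ch0 by (simp add: divide_le_eq mult.commute)
    thus ?thesis using small unfolding t_def by linarith
  qed
  have k2: "chigh * t \<le> 7/100 * clow\<^sup>2"
  proof -
    have "chigh * t \<le> chigh * (7/100 * clow^4 / chigh^3)" using small ch0 unfolding t_def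
      by (intro mult_left_mono) auto
    also have "\<dots> = 7/100 * (clow^4 / chigh^2)" using ch0 by (simp add: power3_eq_cube power2_eq_square field_simps)
    also have "\<dots> \<le> 7/100 * clow\<^sup>2"
    proof -
      have "clow\<^sup>2 \<le> chigh\<^sup>2" using cc clow_pos by (intro power_mono) auto
      hence "clow\<^sup>2 * clow\<^sup>2 \<le> clow\<^sup>2 * chigh\<^sup>2" by (intro mult_left_mono) auto
      hence "clow^4 / chigh^2 \<le> clow\<^sup>2" using ch0 by (simp add: divide_le_eq power2_eq_square power4_eq_xxxx mult_ac)
      thus ?thesis by simp
    qed
    finally show ?thesis .
  qed
  have clch: "clow\<^sup>2 \<le> chigh\<^sup>2" using cc clow_pos by (intro power_mono) auto
  have NQ: "tensor_frob n Q \<le> 3 * chigh * t\<^sup>2"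
  proof -
    have "sqrt NQs \<le> sqrt (chigh\<^sup>2 * S\<^sup>2)" using NQ_bound unfolding NQs_def by simp
    also have "chigh\<^sup>2 * S\<^sup>2 = (chigh * t\<^sup>2)\<^sup>2" using St by (simp add: power_mult_distrib)
    also have "sqrt ((chigh * t\<^sup>2)\<^sup>2) = chigh * t\<^sup>2" using ch0 by (simp only: real_sqrt_abs) simp
    finally show ?thesis using NQ_upper by linarith
  qed
  have NQ2: "tensor_frob n Q \<le> 21/100 * clow\<^sup>2 * t"
  proof -
    have "3 * chigh * t\<^sup>2 = 3 * (chigh * t) * t" by (simp add: power2_eq_square)
    also have "\<dots> \<le> 3 * (7/100 * clow\<^sup>2) * t" using k2 t0 by (intro mult_right_mono) auto
    finally have X: "3 * chigh * t\<^sup>2 \<le> 3 * (7/100 * clow\<^sup>2) * t" .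
    show ?thesis using X NQ by linarith
  qed
  have NC: "tensor_frob n C \<le> t^3"
  proof -
    have "sqrt NCs \<le> sqrt (S^3)" using NC_bound unfolding NCs_def by simp
    also have "S^3 = (t^3)\<^sup>2" using St by (simp add: power_mult[symmetric])
    finally show ?thesis using NC_eq t0 by (simp only: real_sqrt_abs) simp
  qed
  have tt: "t\<^sup>2 \<le> 49/10000 * clow\<^sup>2"
  proof -
    have "t\<^sup>2 \<le> (7/100 * clow)\<^sup>2" using k1 t0 by (intro power_mono) auto
    moreover have "(7/100 * clow)\<^sup>2 = 49/10000 * clow\<^sup>2" by (simp add: power2_eq_square)
    ultimately show ?thesis by linarith
  qed
  have NC2: "tensor_frob n C \<le> 49/10000 * clow\<^sup>2 * t"
  proof -
    have "t^3 = t\<^sup>2 * t" by (simp add: power3_eq_cube power2_eq_square)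
    also have "\<dots> \<le> 49/10000 * clow\<^sup>2 * t" using tt t0 by (intro mult_right_mono) auto
    finally show ?thesis using NC by linarith
  qed
  have NLu: "tensor_frob n L \<le> 3 * (1 + 1/200000) * chigh\<^sup>2 * t"
  proof -
    have "S1 \<le> (1 + \<epsilon>) * (chigh^4 * S)"
      using S1_bounds(2) Y_bounds(2) e0 by (meson order.trans mult_left_mono add_nonneg_nonneg zero_le_one)
    hence "sqrt S1 \<le> sqrt ((1 + \<epsilon>) * (chigh^4 * S))" by simp
    also have "\<dots> = sqrt (1 + \<epsilon>) * (chigh\<^sup>2 * t)"
    proof -
      have "chigh^4 * S = (chigh\<^sup>2 * t)\<^sup>2" using St by (simp add: power_mult_distrib power_mult[symmetric])
      thus ?thesis using ch0 t0 by (simp add: real_sqrt_mult)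
    qed
    also have "\<dots> \<le> (1 + 1/200000) * (chigh\<^sup>2 * t)"
    proof (rule mult_right_mono)
      have "1 + \<epsilon> \<le> (1 + 1/200000)\<^sup>2" using e1 by (simp add: power2_eq_square)
      hence "sqrt (1 + \<epsilon>) \<le> sqrt ((1 + 1/200000)\<^sup>2)" by (rule real_sqrt_le_mono)
      thus "sqrt (1 + \<epsilon>) \<le> 1 + 1/200000" by simp
      show "0 \<le> chigh\<^sup>2 * t" using t0 by simp
    qed
    finally show ?thesis using NL_upper by simp
  qed
  have "tensor_frob n D \<le> 3 * (1 + 1/200000) * chigh\<^sup>2 * t + 21/100 * chigh\<^sup>2 * t + 49/10000 * chigh\<^sup>2 * t"
  proof -
    have "21/100 * clow\<^sup>2 * t \<le> 21/100 * chigh\<^sup>2 * t" using clch t0 by (intro mult_right_mono) auto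
    moreover have "49/10000 * clow\<^sup>2 * t \<le> 49/10000 * chigh\<^sup>2 * t" using clch t0 by (intro mult_right_mono) auto
    ultimately show ?thesis using ND_upper NLu NQ2 NC2 by linarith
  qed
  hence Du: "tensor_frob n D \<le> (3214915/1000000) * (chigh\<^sup>2 * t)" by (simp add: algebra_simps)
  have "(tensor_frob n D)\<^sup>2 \<le> ((3214915/1000000) * (chigh\<^sup>2 * t))\<^sup>2"
    using Du tensor_frob_nonneg by (intro power_mono) auto
  also have "\<dots> = (3214915/1000000)\<^sup>2 * (chigh^4 * S)"
    unfolding St power2_eq_square power4_eq_xxxx by (simp add: algebra_simps)
  also have "\<dots> \<le> 10.336 * (chigh^4 * S)"
    using S0 ch0 by (intro mult_right_mono) (auto simp: power2_eq_square)
  finally show "(tensor_frob n D)\<^sup>2 \<le> 10.336 * chigh^4 * S" by (simp add: mult.assoc)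
  have "tip n L L \<ge> 239/100 * (clow^4 * S)"
  proof -
    have "3 * S1 + 6 * S2 \<ge> 3 * ((1 - \<epsilon>) * Y) + 6 * (- (g * \<beta>\<^sup>2 * Y))"
      using S1_bounds(1) S2_lower by linarith
    moreover have "3 * ((1 - \<epsilon>) * Y) + 6 * (- (g * \<beta>\<^sup>2 * Y)) = (3 - 3 * \<epsilon> - 6 * (g * \<beta>\<^sup>2)) * Y"
      by (simp add: algebra_simps)
    moreover have "(3 - 3 * \<epsilon> - 6 * (g * \<beta>\<^sup>2)) * Y \<ge> 239/100 * Y"
      using e1 gb Y_nonneg by (intro mult_right_mono) auto
    moreover have "239/100 * Y \<ge> 239/100 * (clow^4 * S)" using Y_bounds(1) by (simp add: mult.commute)
    ultimately show ?thesis using tipL by linarith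
  qed
  hence "sqrt (tip n L L) \<ge> sqrt (239/100 * (clow^4 * S))" by simp
  moreover have "sqrt (239/100 * (clow^4 * S)) = sqrt (239/100) * (clow\<^sup>2 * t)"
  proof -
    have "clow^4 * S = (clow\<^sup>2 * t)\<^sup>2" unfolding St power2_eq_square power4_eq_xxxx by (simp add: algebra_simps)
    hence "sqrt (239/100 * (clow^4 * S)) = sqrt (239/100) * sqrt ((clow\<^sup>2 * t)\<^sup>2)"
      by (simp only: real_sqrt_mult)
    thus ?thesis using clow_pos t0 by simp
  qed
  moreover have "sqrt (239/100) \<ge> 1545/1000"
  proof -
    have "(1545/1000::real)\<^sup>2 \<le> 239/100" by (simp add: power2_eq_square)
    hence "sqrt ((1545/1000::real)\<^sup>2) \<le> sqrt (239/100)" by (rule real_sqrt_le_mono)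
    thus ?thesis by simp
  qed
  ultimately have NLl: "tensor_frob n L \<ge> 1545/1000 * (clow\<^sup>2 * t)"
    using tensor_frob_tip[of n L] t0 clow_pos
    by (smt (verit) mult_right_mono zero_le_power2 mult_nonneg_nonneg)
  have Dl: "tensor_frob n D \<ge> 13301/10000 * (clow\<^sup>2 * t)"
    using ND_lower NLl NQ2 NC2 by (simp add: algebra_simps) 
  have "(13301/10000 * (clow\<^sup>2 * t))\<^sup>2 \<le> (tensor_frob n D)\<^sup>2"
    using Dl t0 by (intro power_mono) auto
  moreover have "(13301/10000 * (clow\<^sup>2 * t))\<^sup>2 = (13301/10000)\<^sup>2 * (clow^4 * S)"
    unfolding St power2_eq_square power4_eq_xxxx by (simp add: algebra_simps)
  moreover have "1.679 * (clow^4 * S) \<le> (13301/10000)\<^sup>2 * (clow^4 * S)"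
    using S0 clow_pos by (intro mult_right_mono) (auto simp: power2_eq_square)
  ultimately show "1.679 * clow^4 * S \<le> (tensor_frob n D)\<^sup>2" by (simp add: mult.assoc)
qed

end



lemma ln_pow_bound:
  fixes x :: real and k :: nat
  assumes x1: "x \<ge> 1"
  shows "(ln x) ^ k \<le> (16 * (real k + 1)) ^ k * x powr (1/16)"
proof -
  define d where "d = 1 / (16 * (real k + 1))"
  have d0: "d > 0" unfolding d_def by simp
  have x0: "x > 0" using x1 by simp
  have "d * ln x = ln (x powr d)" using x0 by simp
  also have "\<dots> \<le> x powr d - 1" using x0 by (intro ln_le_minus_one) simp
  finally have "d * ln x \<le> x powr d" by simp
  hence lnb: "ln x \<le> x powr d / d" using d0 by (simp add: field_simps)
  have ln0: "ln x \<ge> 0" using x1 by simp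
  have "(ln x) ^ k \<le> (x powr d / d) ^ k" using lnb ln0 by (intro power_mono) auto
  also have "\<dots> = (1/d) ^ k * (x powr d) ^ k" by (simp add: power_divide field_simps)
  also have "(x powr d) ^ k = x powr (real k * d)"
    using x0 by (simp add: powr_realpow[symmetric] powr_powr mult.commute)
  also have "x powr (real k * d) \<le> x powr (1/16)"
  proof (rule powr_mono[OF _ x1])
    show "real k * d \<le> 1/16" unfolding d_def by (simp add: field_simps)
  qed
  hence "(1/d) ^ k * x powr (real k * d) \<le> (1/d) ^ k * x powr (1/16)"
    using d0 by (intro mult_left_mono) auto
  finally show ?thesis unfolding d_def by simp
qed

lemma lim1: "((\<lambda>x::real. x powr (1/16) * sqrt (x powr 1.25) / x) \<longlongrightarrow> 0) at_top"
  by real_asymp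
lemma lim2: "((\<lambda>x::real. x powr (1/16) / sqrt x) \<longlongrightarrow> 0) at_top"
  by real_asymp
lemma lim3: "((\<lambda>x::real. x powr (1/16) / sqrt x * sqrt (x powr 1.25 / x)) \<longlongrightarrow> 0) at_top"
  by real_asymp
lemma lim4: "((\<lambda>x::real. x powr (1/16) / sqrt x * (sqrt (x powr 1.25 / x))\<^sup>2) \<longlongrightarrow> 0) at_top"
  by real_asymp

lemma asym:
  fixes K Cr c1 :: real and k :: nat
  assumes K0: "K > 0" and C0: "Cr > 0" and c0: "c1 > 0"
  shows "\<exists>n0::nat. \<forall>n\<ge>n0. real n \<ge> 1
     \<and> K * (ln (real n)) ^ k * sqrt (Cr * real n powr 1.25) / real n \<le> 1/100000
     \<and> K * (ln (real n)) ^ k / sqrt (real n) * (1 + c1 * sqrt (Cr * real n powr 1.25 / real n))\<^sup>2 \<le> 1/10"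
proof -
  define M where "M = (16 * (real k + 1)) ^ k"
  define D where "D = c1 * sqrt Cr"
  define a where "a = (\<lambda>x::real. x powr (1/16) / sqrt x)"
  define y where "y = (\<lambda>x::real. sqrt (x powr 1.25 / x))"
  define P where "P = (\<lambda>x::real. x \<ge> 1
     \<and> K * (ln x) ^ k * sqrt (Cr * x powr 1.25) / x \<le> 1/100000
     \<and> K * (ln x) ^ k / sqrt x * (1 + c1 * sqrt (Cr * x powr 1.25 / x))\<^sup>2 \<le> 1/10)"
  have M0: "M > 0" unfolding M_def by simp
  have l1: "((\<lambda>x::real. K * M * sqrt Cr * (x powr (1/16) * sqrt (x powr 1.25) / x)) \<longlongrightarrow> 0) at_top"
    using tendsto_mult[OF tendsto_const lim1, of "K * M * sqrt Cr"] by simp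
  have l2: "((\<lambda>x::real. K * M * (a x + 2 * D * (a x * y x) + D\<^sup>2 * (a x * (y x)\<^sup>2))) \<longlongrightarrow> 0) at_top"
  proof -
    have "((\<lambda>x::real. a x + 2 * D * (a x * y x) + D\<^sup>2 * (a x * (y x)\<^sup>2)) \<longlongrightarrow> 0 + 2 * D * 0 + D\<^sup>2 * 0) at_top"
      unfolding a_def y_def by (intro tendsto_intros lim2 lim3 lim4)
    hence "((\<lambda>x::real. a x + 2 * D * (a x * y x) + D\<^sup>2 * (a x * (y x)\<^sup>2)) \<longlongrightarrow> 0) at_top" by simp
    from tendsto_mult[OF tendsto_const this, of "K * M"] show ?thesis by simp
  qed
  have ev1: "eventually (\<lambda>x::real. K * M * sqrt Cr * (x powr (1/16) * sqrt (x powr 1.25) / x) < 1/100000) at_top"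
    by (rule order_tendstoD(2)[OF l1]) simp
  have ev2: "eventually (\<lambda>x::real. K * M * (a x + 2 * D * (a x * y x) + D\<^sup>2 * (a x * (y x)\<^sup>2)) < 1/10) at_top"
    by (rule order_tendstoD(2)[OF l2]) simp
  have ev3: "eventually (\<lambda>x::real. x \<ge> 1) at_top" by (rule eventually_ge_at_top)
  have "eventually P at_top"
  proof (rule eventually_mono[OF eventually_conj[OF ev3 eventually_conj[OF ev1 ev2]]])
    fix x :: real
    assume H: "1 \<le> x \<and> K * M * sqrt Cr * (x powr (1/16) * sqrt (x powr 1.25) / x) < 1/100000
       \<and> K * M * (a x + 2 * D * (a x * y x) + D\<^sup>2 * (a x * (y x)\<^sup>2)) < 1/10"
    have x1: "x \<ge> 1" using H by simp
    have x0: "x > 0" using x1 by simp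
    have lnb: "K * (ln x) ^ k \<le> K * M * x powr (1/16)"
      using ln_pow_bound[OF x1, of k] K0 unfolding M_def by (simp add: mult.assoc)
    have sq1: "sqrt (Cr * x powr 1.25) = sqrt Cr * sqrt (x powr 1.25)" by (simp add: real_sqrt_mult)
    have "K * (ln x) ^ k * sqrt (Cr * x powr 1.25) / x \<le> K * M * x powr (1/16) * sqrt (Cr * x powr 1.25) / x"
      using lnb x0 C0 by (intro divide_right_mono mult_right_mono) auto
    also have "\<dots> = K * M * sqrt Cr * (x powr (1/16) * sqrt (x powr 1.25) / x)"
      unfolding sq1 by simp
    finally have A: "K * (ln x) ^ k * sqrt (Cr * x powr 1.25) / x \<le> 1/100000" using H by linarith
    have sq2: "sqrt (Cr * x powr 1.25 / x) = sqrt Cr * y x"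
      unfolding y_def by (simp add: real_sqrt_mult real_sqrt_divide)
    have "K * (ln x) ^ k / sqrt x * (1 + c1 * sqrt (Cr * x powr 1.25 / x))\<^sup>2
        \<le> K * M * x powr (1/16) / sqrt x * (1 + c1 * sqrt (Cr * x powr 1.25 / x))\<^sup>2"
      using lnb x0 C0 by (intro divide_right_mono mult_right_mono) auto
    also have "\<dots> = K * M * (a x + 2 * D * (a x * y x) + D\<^sup>2 * (a x * (y x)\<^sup>2))"
      unfolding sq2 a_def D_def by (simp add: power2_eq_square algebra_simps)
    finally have B: "K * (ln x) ^ k / sqrt x * (1 + c1 * sqrt (Cr * x powr 1.25 / x))\<^sup>2 \<le> 1/10"
      using H by linarith
    show "P x" unfolding P_def using x1 A B by simp
  qed
  hence "eventually (\<lambda>n. P (real n)) sequentially"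
    by (rule eventually_compose_filterlim[OF _ filterlim_real_sequentially])
  then obtain N where "\<forall>n\<ge>N. P (real n)" unfolding eventually_sequentially by blast
  thus ?thesis unfolding P_def by blast
qed



lemma inst:
  fixes K Cr c1 :: real and k n r :: nat and uh U :: "nat \<Rightarrow> nat \<Rightarrow> real" and cs :: "nat \<Rightarrow> real"
    and \<sigma> :: "nat \<Rightarrow> nat"
  assumes K0: "K > 0"
    and n1: "real n \<ge> 1"
    and F1: "K * (ln (real n)) ^ k * sqrt (Cr * real n powr 1.25) / real n \<le> 1/100000"
    and F2: "K * (ln (real n)) ^ k / sqrt (real n) * (1 + c1 * sqrt (Cr * real n powr 1.25 / real n))\<^sup>2 \<le> 1/10"
    and c10: "c1 > 0"
    and hr1: "r \<ge> 1" and hr: "real r \<le> Cr * real n powr 1.25"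
    and hcs: "\<forall>p<r. cs p > 0" and hu: "\<forall>p<r. vec_norm n (col uh p) = 1"
    and hG: "\<forall>p<r. \<forall>q<r. p \<noteq> q \<longrightarrow> \<bar>inner_n n (col uh p) (col uh q)\<bar> \<le> K * (ln (real n)) ^ k / sqrt (real n)"
    and hA2: "spec_norm n r uh \<le> 1 + c1 * sqrt (real r / real n)"
    and hA3: "spec_norm r r (\<lambda>p q. inner_n n (col uh p) (col uh q) * inner_n n (col uh p) (col uh q) - (if p = q then 1 else 0))
               \<le> K * (ln (real n)) ^ k * sqrt (real r) / real n"
    and hsig: "bij_betw \<sigma> {..<r} {..<r}"
    and hH: "mat_frob n r (\<lambda>i j. U i j - cs (\<sigma> j) powr (1/3) * uh i (\<sigma> j))
              \<le> 0.07 * Min ((\<lambda>p. cs p powr (1/3)) ` {..<r}) /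
                 (Max ((\<lambda>p. cs p powr (1/3)) ` {..<r}) / Min ((\<lambda>p. cs p powr (1/3)) ` {..<r})) ^ 3"
  shows "1.679 * Min ((\<lambda>p. cs p powr (1/3)) ` {..<r}) ^ 4 * (mat_frob n r (\<lambda>i j. U i j - cs (\<sigma> j) powr (1/3) * uh i (\<sigma> j)))\<^sup>2
           \<le> (tensor_frob n (\<lambda>i j l. sym_cp3 r U i j l - (\<Sum>p<r. cs p * uh i p * uh j p * uh l p)))\<^sup>2
       \<and> (tensor_frob n (\<lambda>i j l. sym_cp3 r U i j l - (\<Sum>p<r. cs p * uh i p * uh j p * uh l p)))\<^sup>2
           \<le> 10.336 * (Max ((\<lambda>p. cs p powr (1/3)) ` {..<r}) / Min ((\<lambda>p. cs p powr (1/3)) ` {..<r})) ^ 4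
               * Min ((\<lambda>p. cs p powr (1/3)) ` {..<r}) ^ 4
               * (mat_frob n r (\<lambda>i j. U i j - cs (\<sigma> j) powr (1/3) * uh i (\<sigma> j)))\<^sup>2"
proof -
  define c where "c = (\<lambda>p. cs p powr (1/3))"
  define clow where "clow = Min (c ` {..<r})"
  define chigh where "chigh = Max (c ` {..<r})"
  define x where "x = real n"
  define \<gamma> where "\<gamma> = K * (ln x) ^ k"
  define g where "g = \<gamma> / sqrt x"
  define \<beta> where "\<beta> = 1 + c1 * sqrt (real r / x)"
  define \<epsilon> where "\<epsilon> = \<gamma> * sqrt (real r) / x"
  define \<tau> where "\<tau> = inv_into {..<r} \<sigma>"
  define h where "h = (\<lambda>p i. U i (\<tau> p) - c p * uh i p)"
  define Hm where "Hm = (\<lambda>i j. U i j - cs (\<sigma> j) powr (1/3) * uh i (\<sigma> j))"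
  have x1: "x \<ge> 1" using n1 unfolding x_def .
  have x0: "x > 0" using x1 by simp
  have \<gamma>0: "\<gamma> \<ge> 0" unfolding \<gamma>_def using K0 x1 by simp
  have tau_bij: "bij_betw \<tau> {..<r} {..<r}" unfolding \<tau>_def by (rule bij_betw_inv_into[OF hsig])
  have sig_tau: "\<And>q. q < r \<Longrightarrow> \<sigma> (\<tau> q) = q"
    unfolding \<tau>_def using bij_betw_inv_into_right[OF hsig] by simp
  have fin: "finite (c ` {..<r})" by simp
  have "0 \<in> {..<r}" using hr1 by simp
  hence ne: "c ` {..<r} \<noteq> {}" by blast
  have c_lo: "\<And>p. p < r \<Longrightarrow> clow \<le> c p" unfolding clow_def using fin by (intro Min_le) auto
  have c_hi: "\<And>p. p < r \<Longrightarrow> c p \<le> chigh" unfolding chigh_def using fin by (intro Max_ge) auto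
  have clow_pos: "clow > 0"
  proof -
    have "clow \<in> c ` {..<r}" unfolding clow_def using fin ne by (rule Min_in)
    then obtain p where p: "p < r" "clow = c p" by auto
    have "cs p > 0" using hcs p(1) by simp
    thus ?thesis using p(2) unfolding c_def by simp
  qed
  have cc: "clow \<le> chigh" using c_lo c_hi hr1 by (meson order.trans less_le_trans zero_less_one)
  have unit: "\<And>p. p < r \<Longrightarrow> (\<Sum>i<n. (uh i p)\<^sup>2) = 1"
    using hu unfolding vec_norm_def col_def by simp
  have offd: "\<And>p q. p < r \<Longrightarrow> q < r \<Longrightarrow> p \<noteq> q \<Longrightarrow> \<bar>\<Sum>i<n. uh i p * uh i q\<bar> \<le> g"
    using hG unfolding g_def \<gamma>_def x_def inner_n_def col_def by simp
  have g0: "0 \<le> g" unfolding g_def using \<gamma>0 x0 by simp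
  have specU: "spec_norm n r uh \<le> \<beta>" using hA2 unfolding \<beta>_def x_def .
  have specE: "spec_norm r r (\<lambda>p q. (\<Sum>i<n. uh i p * uh i q) * (\<Sum>i<n. uh i p * uh i q)
                   - (if p = q then 1 else 0)) \<le> \<epsilon>"
    using hA3 unfolding \<epsilon>_def \<gamma>_def x_def inner_n_def col_def by simp
  interpret C: core n r uh c h clow chigh g \<beta> \<epsilon>
    by unfold_locales (use c_lo c_hi clow_pos unit offd g0 specU specE in auto)
  have e0: "0 \<le> \<epsilon>" unfolding \<epsilon>_def using \<gamma>0 x0 by simp
  have sqr: "sqrt (real r) \<le> sqrt (Cr * x powr 1.25)" using hr unfolding x_def by simp
  have e1: "\<epsilon> \<le> 1/100000"
  proof -
    have "\<epsilon> \<le> \<gamma> * sqrt (Cr * x powr 1.25) / x"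
      unfolding \<epsilon>_def using sqr \<gamma>0 x0 by (intro divide_right_mono mult_left_mono) auto
    thus ?thesis using F1 unfolding \<gamma>_def x_def by linarith
  qed
  have gb: "g * \<beta>\<^sup>2 \<le> 1/10"
  proof -
    have "sqrt (real r / x) \<le> sqrt (Cr * x powr 1.25 / x)"
      using hr x0 unfolding x_def by (simp add: divide_right_mono)
    hence "\<beta> \<le> 1 + c1 * sqrt (Cr * x powr 1.25 / x)" unfolding \<beta>_def using c10 by simp
    moreover have "\<beta> \<ge> 0" unfolding \<beta>_def using c10 x0
      by (intro add_nonneg_nonneg mult_nonneg_nonneg) auto
    ultimately have "\<beta>\<^sup>2 \<le> (1 + c1 * sqrt (Cr * x powr 1.25 / x))\<^sup>2" by (intro power_mono) auto
    hence "g * \<beta>\<^sup>2 \<le> g * (1 + c1 * sqrt (Cr * x powr 1.25 / x))\<^sup>2" using g0 by (intro mult_left_mono)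
    thus ?thesis using F2 unfolding g_def \<gamma>_def x_def by linarith
  qed
  have Hm_tau: "\<And>i q. q < r \<Longrightarrow> Hm i (\<tau> q) = h q i"
    unfolding Hm_def h_def c_def using sig_tau by simp
  have S_eq: "C.S = (mat_frob n r Hm)\<^sup>2"
  proof -
    have "(mat_frob n r Hm)\<^sup>2 = (\<Sum>i<n. \<Sum>j<r. (Hm i j)\<^sup>2)"
      unfolding mat_frob_def by (simp add: sum_nonneg)
    also have "\<dots> = (\<Sum>i<n. \<Sum>q<r. (Hm i (\<tau> q))\<^sup>2)"
      by (rule sum.cong[OF refl], rule sum.reindex_bij_betw[OF tau_bij, symmetric])
    also have "\<dots> = (\<Sum>i<n. \<Sum>q<r. (h q i)\<^sup>2)"
      by (rule sum.cong[OF refl], rule sum.cong[OF refl]) (simp add: Hm_tau)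
    also have "\<dots> = (\<Sum>q<r. \<Sum>i<n. (h q i)\<^sup>2)" by (rule sum.swap)
    also have "\<dots> = C.S" unfolding C.S_def C.a_sq ..
    finally show ?thesis by simp
  qed
  have sqrtS: "sqrt C.S = mat_frob n r Hm"
    unfolding S_eq mat_frob_def by (simp add: sum_nonneg)
  have small: "sqrt C.S \<le> 7/100 * clow^4 / chigh^3"
  proof -
    have "0.07 * clow / (chigh / clow) ^ 3 = 7/100 * clow^4 / chigh^3"
      using clow_pos by (simp add: power_divide field_simps power4_eq_xxxx power3_eq_cube)
    thus ?thesis using hH unfolding sqrtS Hm_def clow_def chigh_def c_def by simp
  qed
  have D_eq: "(\<lambda>i j l. sym_cp3 r U i j l - (\<Sum>p<r. cs p * uh i p * uh j p * uh l p)) = C.D"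
  proof (intro ext)
    fix i j l
    have "sym_cp3 r U i j l = (\<Sum>q<r. U i (\<tau> q) * U j (\<tau> q) * U l (\<tau> q))"
      unfolding sym_cp3_def by (rule sum.reindex_bij_betw[OF tau_bij, symmetric])
    also have "\<dots> = (\<Sum>p<r. (h p i + C.v p i) * (h p j + C.v p j) * (h p l + C.v p l))"
      unfolding h_def C.v_def by simp
    finally have A: "sym_cp3 r U i j l = (\<Sum>p<r. (h p i + C.v p i) * (h p j + C.v p j) * (h p l + C.v p l))" .
    have "(\<Sum>p<r. cs p * uh i p * uh j p * uh l p) = (\<Sum>p<r. C.v p i * C.v p j * C.v p l)"
    proof (intro sum.cong refl)
      fix p assume "p \<in> {..<r}"
      hence cp: "cs p > 0" using hcs by auto
      have "(c p) ^ 3 = cs p" unfolding c_def using cp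
        by (simp add: powr_realpow[symmetric] powr_powr)
      thus "cs p * uh i p * uh j p * uh l p = C.v p i * C.v p j * C.v p l"
        unfolding C.v_def by (simp add: power3_eq_cube mult_ac)
    qed
    thus "sym_cp3 r U i j l - (\<Sum>p<r. cs p * uh i p * uh j p * uh l p) = C.D i j l"
      unfolding C.D_def using A by simp
  qed
  have M: "1.679 * clow^4 * C.S \<le> (tensor_frob n C.D)\<^sup>2" "(tensor_frob n C.D)\<^sup>2 \<le> 10.336 * chigh^4 * C.S"
    using C.core_main[OF e0 e1 gb cc small] by auto
  have om: "(chigh / clow) ^ 4 * clow ^ 4 = chigh ^ 4" using clow_pos by (simp add: power_divide)
  show ?thesis
    using M om unfolding D_eq S_eq Hm_def[symmetric] clow_def chigh_def c_def
    by (simp add: mult.assoc)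
qed

theorem lemma2:
  fixes K Cr c1 :: real and k :: nat
  assumes "K > 0" and "Cr > 0" and "c1 > 0"
  shows "\<exists>n0::nat. \<forall>n\<ge>n0. \<forall>(r::nat) (uh::nat \<Rightarrow> nat \<Rightarrow> real) (cs::nat \<Rightarrow> real)
           (U::nat \<Rightarrow> nat \<Rightarrow> real) (\<sigma>::nat \<Rightarrow> nat).
    let \<gamma> = K * (ln (real n)) ^ k;
        Ustar = (\<lambda>i p. cs p powr (1/3) * uh i p);
        clow = Min ((\<lambda>p. cs p powr (1/3)) ` {..<r});
        chigh = Max ((\<lambda>p. cs p powr (1/3)) ` {..<r});
        \<omega> = chigh / clow;
        H = (\<lambda>i j. U i j - Ustar i (\<sigma> j));
        Tstar = (\<lambda>i j l. \<Sum>p<r. cs p * uh i p * uh j p * uh l p);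
        T = sym_cp3 r U;
        G = (\<lambda>p q. inner_n n (col uh p) (col uh q))
    in (r \<ge> 1 \<and> real r \<le> Cr * real n powr 1.25
        \<and> (\<forall>p<r. cs p > 0) \<and> (\<forall>p<r. vec_norm n (col uh p) = 1)
        \<and> (\<forall>p<r. \<forall>q<r. p \<noteq> q \<longrightarrow> \<bar>G p q\<bar> \<le> \<gamma> / sqrt (real n))
        \<and> spec_norm n r uh \<le> 1 + c1 * sqrt (real r / real n)
        \<and> spec_norm r r (\<lambda>p q. G p q * G p q - (if p = q then 1 else 0)) \<le> \<gamma> * sqrt (real r) / real n
        \<and> bij_betw \<sigma> {..<r} {..<r}
        \<and> (\<forall>\<tau>. bij_betw \<tau> {..<r} {..<r} \<longrightarrow>
             mat_frob n r H \<le> mat_frob n r (\<lambda>i j. U i j - Ustar i (\<tau> j)))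
        \<and> mat_frob n r H \<le> 0.07 * clow / \<omega> ^ 3)
      \<longrightarrow> 1.679 * clow ^ 4 * (mat_frob n r H)\<^sup>2 \<le> (tensor_frob n (\<lambda>i j l. T i j l - Tstar i j l))\<^sup>2
        \<and> (tensor_frob n (\<lambda>i j l. T i j l - Tstar i j l))\<^sup>2 \<le> 10.336 * \<omega> ^ 4 * clow ^ 4 * (mat_frob n r H)\<^sup>2"
  proof -
  obtain n0 where n0: "\<forall>n\<ge>n0. real n \<ge> 1
     \<and> K * (ln (real n)) ^ k * sqrt (Cr * real n powr 1.25) / real n \<le> 1/100000
     \<and> K * (ln (real n)) ^ k / sqrt (real n) * (1 + c1 * sqrt (Cr * real n powr 1.25 / real n))\<^sup>2 \<le> 1/10"
    using asym[OF assms] by blast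
  show ?thesis
    unfolding Let_def
    apply (intro exI[of _ n0] allI impI)
    apply (elim conjE)
    apply (rule inst[OF assms(1) _ _ _ assms(3)])
    apply (use n0 in blast)+
    done
qed

end
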